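(* For every graph $G$ with $n$ vertices, $P(G,m)-P_{DP}(G,m)=O(m^{n-2})$ as $m\to\infty$.
   Context: All graphs are finite and simple. $P(G,m)$ denotes the chromatic polynomial of $G$. A cover of a graph $G$ is a pair $\mathcal{H}=(L,H)$ where $H$ is a graph and $L:V(G)\to\mathcal{P}(V(H))$ satisfies: (1) the sets $L(u)$, $u\in V(G)$, partition $V(H)$; (2) for every $u$, $H[L(u)]$ is complete; (3) if $E_H(L(u),L(v))\neq\emptyset$ then $u=v$ or $uv\in E(G)$; (4) if $uv\in E(G)$ then $E_H(L(u),L(v))$ is a matching (possibly empty). Here $E_H(S,U)$ is the set of edges of $H$ between $S$ and $U$. The cover is $m$-fold if $|L(u)|=m$ for all $u$. An $\mathcal{H}$-coloring is an independent set of $H$ of size $|V(G)|$. $P_{DP}(G,\mathcal{H})$ is the number of $\mathcal{H}$-colorings, and $P_{DP}(G,m)$ is the minimum of $P_{DP}(G,\mathcal{H})$ over all $m$-fold covers $\mathcal{H}$ of $G$. *)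

theory Defs
  imports Main "HOL-Library.FuncSet" "HOL-Library.Landau_Symbols"
begin

definition simple_graph :: "'a set \<Rightarrow> ('a \<times> 'a) set \<Rightarrow> bool" where
  "simple_graph V E \<longleftrightarrow> finite V \<and> E \<subseteq> V \<times> V \<and> sym E \<and> irrefl E"

definition chrom_poly :: "'a set \<Rightarrow> ('a \<times> 'a) set \<Rightarrow> nat \<Rightarrow> nat" where
  "chrom_poly V E m = card {f. f \<in> V \<rightarrow>\<^sub>E {0..<m} \<and> (\<forall>(u,v)\<in>E. f u \<noteq> f v)}"

definition edges_between :: "('b \<times> 'b) set \<Rightarrow> 'b set \<Rightarrow> 'b set \<Rightarrow> ('b \<times> 'b) set" where
  "edges_between EH S U = {(x,y). (x,y) \<in> EH \<and> x \<in> S \<and> y \<in> U}"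

definition is_cover ::
  "'a set \<Rightarrow> ('a \<times> 'a) set \<Rightarrow> ('a \<Rightarrow> 'b set) \<Rightarrow> 'b set \<Rightarrow> ('b \<times> 'b) set \<Rightarrow> bool" where
  "is_cover V E L VH EH \<longleftrightarrow>
     simple_graph VH EH \<and>
     \<comment> \<open>(1) the sets L(u), u in V(G), partition V(H)\<close>
     (\<Union>u\<in>V. L u) = VH \<and>
     (\<forall>u\<in>V. \<forall>v\<in>V. u \<noteq> v \<longrightarrow> L u \<inter> L v = {}) \<and>
     \<comment> \<open>(2) each H[L(u)] is complete\<close>
     (\<forall>u\<in>V. \<forall>x\<in>L u. \<forall>y\<in>L u. x \<noteq> y \<longrightarrow> (x,y) \<in> EH) \<and>
     \<comment> \<open>(3) edges between L(u), L(v) only if u = v or uv in E(G)\<close>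
     (\<forall>u\<in>V. \<forall>v\<in>V. edges_between EH (L u) (L v) \<noteq> {} \<longrightarrow> u = v \<or> (u,v) \<in> E) \<and>
     \<comment> \<open>(4) for uv in E(G), the edges between L(u), L(v) form a matching\<close>
     (\<forall>(u,v)\<in>E. \<forall>(x1,y1)\<in>edges_between EH (L u) (L v). \<forall>(x2,y2)\<in>edges_between EH (L u) (L v).
         (x1 = x2 \<longleftrightarrow> y1 = y2))"

definition is_m_fold_cover ::
  "'a set \<Rightarrow> ('a \<times> 'a) set \<Rightarrow> nat \<Rightarrow> ('a \<Rightarrow> 'b set) \<Rightarrow> 'b set \<Rightarrow> ('b \<times> 'b) set \<Rightarrow> bool" where
  "is_m_fold_cover V E m L VH EH \<longleftrightarrow> is_cover V E L VH EH \<and> (\<forall>u\<in>V. card (L u) = m)"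

definition P_DP_cover :: "'a set \<Rightarrow> 'b set \<Rightarrow> ('b \<times> 'b) set \<Rightarrow> nat" where
  "P_DP_cover V VH EH =
     card {I. I \<subseteq> VH \<and> (\<forall>x\<in>I. \<forall>y\<in>I. (x,y) \<notin> EH) \<and> card I = card V}"

text \<open>Every (finite) cover is
isomorphic to one whose cover graph has vertices in the countably infinite type
'a \<times> nat, so minimizing over covers with that vertex type loses nothing.\<close>
definition P_DP :: "'a set \<Rightarrow> ('a \<times> 'a) set \<Rightarrow> nat \<Rightarrow> nat" where
  "P_DP V E m = Inf {P_DP_cover V VH EH | (L :: 'a \<Rightarrow> ('a \<times> nat) set) VH EH.
                       is_m_fold_cover V E m L VH EH}"

end

theory Submission
  imports Defs
begin


lemma card_PiE_const:
  assumes "finite A" "\<forall>a\<in>A. card (L a) = m"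
  shows "card (PiE A L) = m ^ card A"
  using assms by (simp add: card_PiE)

lemma restrict_bound:
  assumes fin: "finite W" and WV: "W \<subseteq> V" and cW: "\<forall>a\<in>W. card (L a) = m" and fL: "\<forall>a\<in>W. finite (L a)"
    and S: "S \<subseteq> PiE V L" and inj: "inj_on (\<lambda>f. restrict f W) S"
  shows "card S \<le> m ^ card W"
proof -
  have "(\<lambda>f. restrict f W) ` S \<subseteq> PiE W L"
    using S WV by (auto simp: PiE_iff dest!: subsetD[OF S])
  moreover have "finite (PiE W L)" using fin fL by (intro finite_PiE) auto
  ultimately have "card ((\<lambda>f. restrict f W) ` S) \<le> card (PiE W L)" by (rule card_mono[rotated])
  also have "\<dots> = m ^ card W" using card_PiE_const[OF fin cW] .
  finally show ?thesis using card_image[OF inj] by simp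
qed

lemma bonf:
  fixes B :: "'k \<Rightarrow> 'x set"
  assumes "finite K" "\<forall>k\<in>K. finite (B k)"
  shows "real (card (\<Union>k\<in>K. B k)) \<ge> (\<Sum>k\<in>K. real (card (B k))) - (\<Sum>k\<in>K. \<Sum>l\<in>K-{k}. real (card (B k \<inter> B l)))"
  using assms
proof (induction K rule: finite_induct)
  case empty
  then show ?case by simp
next
  case (insert a K)
  let ?U = "\<Union>k\<in>K. B k"
  let ?c = "\<lambda>k l. real (card (B k \<inter> B l))"
  have fU: "finite ?U" using insert by auto
  have fa: "finite (B a)" using insert by auto
  have un: "real (card (B a \<union> ?U)) = real (card (B a)) + real (card ?U) - real (card (B a \<inter> ?U))"
    using card_Un_Int[OF fa fU] by simp
  have "card (B a \<inter> ?U) = card (\<Union>l\<in>K. B a \<inter> B l)" by (simp only: Int_UN_distrib)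
  also have "\<dots> \<le> (\<Sum>l\<in>K. card (B a \<inter> B l))" by (rule card_UN_le[OF insert(1)])
  finally have "real (card (B a \<inter> ?U)) \<le> real (\<Sum>l\<in>K. card (B a \<inter> B l))"
    by (simp only: of_nat_le_iff)
  hence i1: "real (card (B a \<inter> ?U)) \<le> (\<Sum>l\<in>K. ?c a l)" by simp
  have d1: "(\<Sum>l\<in>insert a K - {a}. ?c a l) = (\<Sum>l\<in>K. ?c a l)"
    using insert by (metis Diff_insert_absorb)
  have d2: "(\<Sum>k\<in>K. \<Sum>l\<in>insert a K-{k}. ?c k l) \<ge> (\<Sum>k\<in>K. \<Sum>l\<in>K-{k}. ?c k l)"
  proof (rule sum_mono)
    fix k assume "k \<in> K"
    have "K - {k} \<subseteq> insert a K - {k}" by auto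
    then show "(\<Sum>l\<in>K-{k}. ?c k l) \<le> (\<Sum>l\<in>insert a K-{k}. ?c k l)"
      by (intro sum_mono2) (use insert in auto)
  qed
  have dd: "(\<Sum>k\<in>insert a K. \<Sum>l\<in>insert a K-{k}. ?c k l) = (\<Sum>l\<in>K. ?c a l) + (\<Sum>k\<in>K. \<Sum>l\<in>insert a K-{k}. ?c k l)"
    using insert d1 by (simp add: sum.insert)
  show ?case
    using insert un i1 d2 dd by (simp add: sum.insert)
qed



lemma dp_lower:
  fixes V :: "'a set" and E and L :: "'a \<Rightarrow> 'b set" and h :: "'a \<Rightarrow> nat"
  assumes G: "simple_graph V E" and C: "is_m_fold_cover V E m L VH EH" and h: "inj_on h V"
  shows "real (m ^ card V) - real (card {(u,v)\<in>E. h u < h v}) * real m ^ (card V - 1)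
          \<le> real (P_DP_cover V VH EH)"
proof -
  define E' where "E' = {(u,v)\<in>E. h u < h v}"
  have finV: "finite V" and EV: "E \<subseteq> V \<times> V" and symE: "sym E" and irrE: "irrefl E"
    using G by (auto simp: simple_graph_def)
  have sgH: "simple_graph VH EH" and unL: "(\<Union>u\<in>V. L u) = VH"
    and disj: "\<forall>u\<in>V. \<forall>v\<in>V. u \<noteq> v \<longrightarrow> L u \<inter> L v = {}"
    and c3: "\<forall>u\<in>V. \<forall>v\<in>V. edges_between EH (L u) (L v) \<noteq> {} \<longrightarrow> u = v \<or> (u,v) \<in> E"
    and c4: "\<forall>(u,v)\<in>E. \<forall>(x1,y1)\<in>edges_between EH (L u) (L v). \<forall>(x2,y2)\<in>edges_between EH (L u) (L v).
         (x1 = x2 \<longleftrightarrow> y1 = y2)"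
    and cL: "\<forall>u\<in>V. card (L u) = m"
    using C by (auto simp: is_m_fold_cover_def is_cover_def)
  have finVH: "finite VH" and symH: "sym EH" and irrH: "irrefl EH"
    using sgH by (auto simp: simple_graph_def)
  have LVH: "\<And>u. u \<in> V \<Longrightarrow> L u \<subseteq> VH" using unL by auto
  have finL: "\<forall>u\<in>V. finite (L u)" using LVH finVH finite_subset by blast
  define F where "F = PiE V L"
  define G' where "G' = {f\<in>F. \<forall>u\<in>V. \<forall>v\<in>V. u \<noteq> v \<longrightarrow> (f u, f v) \<notin> EH}"
  define S where "S = {I. I \<subseteq> VH \<and> (\<forall>x\<in>I. \<forall>y\<in>I. (x,y) \<notin> EH) \<and> card I = card V}"
  have finF: "finite F" unfolding F_def using finV finL by (intro finite_PiE) auto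
  have cardF: "card F = m ^ card V" unfolding F_def using card_PiE_const[OF finV cL] .
  have finS: "finite S"
    by (rule finite_subset[of _ "Pow VH"]) (use finVH in \<open>auto simp: S_def\<close>)
  have own: "\<And>f u v. f \<in> F \<Longrightarrow> u \<in> V \<Longrightarrow> v \<in> V \<Longrightarrow> f u = f v \<Longrightarrow> u = v"
  proof -
    fix f u v assume "f \<in> F" "u \<in> V" "v \<in> V" "f u = f v"
    have a: "f u \<in> L u" "f v \<in> L v" using \<open>f \<in> F\<close> \<open>u \<in> V\<close> \<open>v \<in> V\<close> by (auto simp: F_def)
    then show "u = v" using disj \<open>u \<in> V\<close> \<open>v \<in> V\<close> \<open>f u = f v\<close> by (metis disjoint_iff)
  qed
  have "card G' \<le> card S"
  proof (rule card_inj_on_le[OF _ _ finS])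
    show "inj_on (\<lambda>f. f ` V) G'"
    proof (rule inj_onI)
      fix f g assume f: "f \<in> G'" and g: "g \<in> G'" and eq: "f ` V = g ` V"
      have fF: "f \<in> F" and gF: "g \<in> F" using f g by (auto simp: G'_def)
      show "f = g"
      proof (rule PiE_ext)
        show "f \<in> PiE V L" "g \<in> PiE V L" using fF gF by (auto simp: F_def)
        fix u assume u: "u \<in> V"
        then have "f u \<in> g ` V" using eq by blast
        then obtain v where v: "v \<in> V" "f u = g v" by blast
        have "f u \<in> L u" "g v \<in> L v" using fF gF u v(1) by (auto simp: F_def)
        then have "u = v" using disj u v by (metis disjoint_iff)
        then show "f u = g u" using v by simp
      qed
    qed
    show "(\<lambda>f. f ` V) ` G' \<subseteq> S"
    proof
      fix I assume "I \<in> (\<lambda>f. f ` V) ` G'"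
      then obtain f where f: "f \<in> G'" and I: "I = f ` V" by blast
      have fF: "f \<in> F" using f by (auto simp: G'_def)
      have "I \<subseteq> VH" using fF LVH by (auto simp: I F_def)
      moreover have "\<forall>x\<in>I. \<forall>y\<in>I. (x,y) \<notin> EH"
      proof (intro ballI)
        fix x y assume "x \<in> I" "y \<in> I"
        then obtain u v where uv: "u \<in> V" "v \<in> V" "x = f u" "y = f v" using I by blast
        show "(x,y) \<notin> EH"
        proof (cases "u = v")
          case True then show ?thesis using irrH uv by (auto simp: irrefl_def)
        next
          case False then show ?thesis using f uv by (auto simp: G'_def)
        qed
      qed
      moreover have "card I = card V"
        unfolding I by (rule card_image) (use own fF in \<open>auto intro: inj_onI\<close>)
      ultimately show "I \<in> S" by (simp add: S_def)
    qed
  qed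
  then have cG: "card G' \<le> P_DP_cover V VH EH" by (simp add: S_def P_DP_cover_def)
  define B where "B k = {f\<in>F. (f (fst k), f (snd k)) \<in> EH}" for k
  have sub: "F - G' \<subseteq> (\<Union>k\<in>E'. B k)"
  proof
    fix f assume "f \<in> F - G'"
    then obtain u v where f: "f \<in> F" and uv: "u \<in> V" "v \<in> V" "u \<noteq> v" "(f u, f v) \<in> EH"
      by (auto simp: G'_def)
    have "f u \<in> L u" "f v \<in> L v" using f uv by (auto simp: F_def)
    then have "edges_between EH (L u) (L v) \<noteq> {}" using uv by (auto simp: edges_between_def)
    then have uvE: "(u,v) \<in> E" using c3 uv by blast
    have "h u \<noteq> h v" using h uv by (auto dest: inj_onD)
    then show "f \<in> (\<Union>k\<in>E'. B k)"
    proof (cases "h u < h v")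
      case True then show ?thesis using uvE f uv by (auto simp: E'_def B_def)
    next
      case False
      then have "(v,u) \<in> E'" using uvE symE \<open>h u \<noteq> h v\<close> by (auto simp: E'_def sym_def)
      moreover have "(f v, f u) \<in> EH" using uv symH by (auto simp: sym_def)
      ultimately show ?thesis using f unfolding B_def by (intro UN_I[of "(v,u)"]) auto
    qed
  qed
  have cB: "card (B k) \<le> m ^ (card V - 1)" if k: "k \<in> E'" for k
  proof -
    obtain u v where kuv: "k = (u,v)" by fastforce
    have uvE: "(u,v) \<in> E" using k kuv by (auto simp: E'_def)
    then have uv: "u \<in> V" "v \<in> V" "u \<noteq> v" using EV irrE by (auto simp: irrefl_def)
    have "card (B k) \<le> m ^ card (V - {v})"
    proof (rule restrict_bound[where V = V and L = L])
      show "finite (V - {v})" using finV by simp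
      show "V - {v} \<subseteq> V" by auto
      show "\<forall>a\<in>V - {v}. card (L a) = m" using cL by auto
      show "\<forall>a\<in>V - {v}. finite (L a)" using finL by auto
      show "B k \<subseteq> PiE V L" by (auto simp: B_def F_def)
      show "inj_on (\<lambda>f. restrict f (V - {v})) (B k)"
      proof (rule inj_onI)
        fix f g assume f: "f \<in> B k" and g: "g \<in> B k" and eq: "restrict f (V - {v}) = restrict g (V - {v})"
        have agree: "\<And>x. x \<in> V - {v} \<Longrightarrow> f x = g x" using eq by (metis restrict_apply')
        have fF: "f \<in> F" and gF: "g \<in> F" using f g by (auto simp: B_def)
        have e1: "(f u, f v) \<in> edges_between EH (L u) (L v)"
          using f fF uv by (auto simp: B_def kuv edges_between_def F_def)
        have e2: "(g u, g v) \<in> edges_between EH (L u) (L v)"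
          using g gF uv by (auto simp: B_def kuv edges_between_def F_def)
        have "f u = g u" using agree uv by auto
        then have "f v = g v" using c4 uvE e1 e2 by fastforce
        show "f = g"
          by (rule PiE_ext[of f V L g]) (use fF gF agree \<open>f v = g v\<close> in \<open>auto simp: F_def\<close>)
      qed
    qed
    then show ?thesis using uv finV by simp
  qed
  have finE: "finite E'" unfolding E'_def
    by (rule finite_subset[of _ "V \<times> V"]) (use EV finV in auto)
  have "card (F - G') \<le> card (\<Union>k\<in>E'. B k)"
    by (rule card_mono[OF finite_subset[OF _ finF] sub]) (auto simp: B_def)
  also have "\<dots> \<le> (\<Sum>k\<in>E'. card (B k))" by (rule card_UN_le[OF finE])
  also have "\<dots> \<le> card E' * m ^ (card V - 1)"
    using sum_bounded_above[of E' "\<lambda>k. card (B k)" "m ^ (card V - 1)"] cB by simp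
  finally have cD: "card (F - G') \<le> card E' * m ^ (card V - 1)" .
  have GF: "G' \<subseteq> F" by (auto simp: G'_def)
  have "card (F - G') = card F - card G'"
    by (rule card_Diff_subset[OF finite_subset[OF GF finF] GF])
  moreover have "card G' \<le> card F" by (rule card_mono[OF finF GF])
  ultimately have "real (card F) \<le> real (card G') + real (card E' * m ^ (card V - 1))"
    using cD by linarith
  then show ?thesis using cG cardF unfolding E'_def by simp
qed



lemma chrom_upper:
  fixes V :: "'a set" and E and h :: "'a \<Rightarrow> nat"
  assumes G: "simple_graph V E" and h: "inj_on h V"
  shows "real (chrom_poly V E m) \<le> real m ^ card V - real (card {(u,v)\<in>E. h u < h v}) * real m ^ (card V - 1)
            + real (card {(u,v)\<in>E. h u < h v}) ^ 2 * real m ^ (card V - 2)"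
proof -
  define E' where "E' = {(u,v)\<in>E. h u < h v}"
  have finV: "finite V" and EV: "E \<subseteq> V \<times> V" and symE: "sym E" and irrE: "irrefl E"
    using G by (auto simp: simple_graph_def)
  define F where "F = PiE V (\<lambda>_. {0..<m::nat})"
  define B where "B k = {f\<in>F. f (fst k) = f (snd k)}" for k
  have finF: "finite F" unfolding F_def using finV by (intro finite_PiE) auto
  have cardF: "card F = m ^ card V" unfolding F_def using card_PiE_const[OF finV, of "\<lambda>_. {0..<m}" m] by simp
  have finE: "finite E'" unfolding E'_def
    by (rule finite_subset[of _ "V \<times> V"]) (use EV finV in auto)
  have E'E: "E' \<subseteq> E" by (auto simp: E'_def)
  have uvV: "u \<in> V" "v \<in> V" "u \<noteq> v" if "(u,v) \<in> E'" for u v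
    using that E'E EV irrE by (auto simp: irrefl_def)
  have chr: "{f. f \<in> V \<rightarrow>\<^sub>E {0..<m} \<and> (\<forall>(u,v)\<in>E. f u \<noteq> f v)} = F - (\<Union>k\<in>E'. B k)"
  proof (intro equalityI subsetI)
    fix f assume "f \<in> {f. f \<in> V \<rightarrow>\<^sub>E {0..<m} \<and> (\<forall>(u,v)\<in>E. f u \<noteq> f v)}"
    then show "f \<in> F - (\<Union>k\<in>E'. B k)" using E'E by (fastforce simp: F_def B_def)
  next
    fix f assume f: "f \<in> F - (\<Union>k\<in>E'. B k)"
    have "f u \<noteq> f v" if uv: "(u,v) \<in> E" for u v
    proof -
      have "u \<in> V" "v \<in> V" "u \<noteq> v" using uv EV irrE by (auto simp: irrefl_def)
      then have "h u \<noteq> h v" using h by (auto dest: inj_onD)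
      then have "(u,v) \<in> E' \<or> (v,u) \<in> E'" using uv symE by (auto simp: E'_def sym_def)
      then show ?thesis using f by (auto simp: B_def)
    qed
    then show "f \<in> {f. f \<in> V \<rightarrow>\<^sub>E {0..<m} \<and> (\<forall>(u,v)\<in>E. f u \<noteq> f v)}"
      using f by (auto simp: F_def)
  qed
  have finB: "\<forall>k\<in>E'. finite (B k)" using finF by (auto simp: B_def)
  have cB: "card (B k) \<ge> m ^ (card V - 1)" if k: "k \<in> E'" for k
  proof -
    obtain u v where kuv: "k = (u,v)" by fastforce
    have uv: "u \<in> V" "v \<in> V" "u \<noteq> v" using uvV k kuv by auto
    have fBk: "finite (B k)" using finB k by auto
    have inj: "inj_on (\<lambda>g. g(v := g u)) (PiE (V - {v}) (\<lambda>_. {0..<m}))"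
      proof (rule inj_onI)
        fix g1 g2 assume g1: "g1 \<in> PiE (V - {v}) (\<lambda>_. {0..<m})" and g2: "g2 \<in> PiE (V - {v}) (\<lambda>_. {0..<m})"
          and eq: "g1(v := g1 u) = g2(v := g2 u)"
        show "g1 = g2"
        proof
          fix x show "g1 x = g2 x"
          proof (cases "x = v")
            case True
            then have "g1 x = undefined" "g2 x = undefined" using g1 g2 by auto
            then show ?thesis by simp
          next
            case False then show ?thesis using fun_cong[OF eq, of x] by simp
          qed
        qed
      qed
    have sub: "(\<lambda>g. g(v := g u)) ` PiE (V - {v}) (\<lambda>_. {0..<m}) \<subseteq> B k"
      proof (rule image_subsetI)
        fix g assume g: "g \<in> PiE (V - {v}) (\<lambda>_. {0..<m::nat})"
        define f where "f = g(v := g u)"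
        have gu: "g u \<in> {0..<m}" by (rule PiE_mem[OF g]) (use uv in simp)
        have "\<forall>i\<in>V. f i \<in> {0..<m}"
        proof
          fix i assume i: "i \<in> V"
          show "f i \<in> {0..<m}"
          proof (cases "i = v")
            case True then show ?thesis using gu by (simp add: f_def)
          next
            case False
            then have "g i \<in> {0..<m}" by (intro PiE_mem[OF g]) (use i in simp)
            then show ?thesis using False by (simp add: f_def)
          qed
        qed
        moreover have "\<forall>x. x \<notin> V \<longrightarrow> f x = undefined"
        proof (intro allI impI)
          fix x assume "x \<notin> V"
          then have "x \<noteq> v" "x \<notin> V - {v}" using uv by auto
          then show "f x = undefined" using PiE_arb[OF g] by (simp add: f_def)
        qed
        then have "f \<in> extensional V" by (simp add: extensional_def)
        ultimately have "f \<in> F" by (simp add: F_def PiE_iff)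
        moreover have "f u = f v" using uv(3) by (simp add: f_def)
        ultimately have "f \<in> B k" by (simp add: B_def kuv)
        then show "g(v := g u) \<in> B k" by (simp add: f_def)
      qed
    have "card (PiE (V - {v}) (\<lambda>_. {0..<m})) \<le> card (B k)"
      by (rule card_inj_on_le[OF inj sub fBk])
    moreover have "card (PiE (V - {v}) (\<lambda>_. {0..<m})) = m ^ (card V - 1)"
      using card_PiE_const[of "V - {v}" "\<lambda>_. {0..<m}" m] finV uv by simp
    ultimately show ?thesis by simp
  qed
  have cBB: "card (B k \<inter> B l) \<le> m ^ (card V - 2)" if k: "k \<in> E'" and l: "l \<in> E'" and kl: "k \<noteq> l" for k l
  proof -
    obtain u v where kuv: "k = (u,v)" by fastforce
    obtain x y where lxy: "l = (x,y)" by fastforce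
    have uv: "u \<in> V" "v \<in> V" "u \<noteq> v" using uvV k kuv by auto
    have xy: "x \<in> V" "y \<in> V" "x \<noteq> y" using uvV l lxy by auto
    have huv: "h u < h v" and hxy: "h x < h y" using k l kuv lxy by (auto simp: E'_def)
    obtain w z where wz: "{w,z} = {u,v}" "w \<noteq> z" "w \<noteq> x" "w \<noteq> y"
    proof (cases "v \<noteq> x \<and> v \<noteq> y")
      case True then show ?thesis using that[of v u] uv by auto
    next
      case False
      show ?thesis
      proof (cases "u \<noteq> x \<and> u \<noteq> y")
        case True then show ?thesis using that[of u v] uv by auto
      next
        case False2: False
        have "(u = x \<and> v = y) \<or> (u = y \<and> v = x)" using False False2 uv by auto
        then show ?thesis using kl kuv lxy huv hxy by auto
      qed
    qed
    have wzV: "w \<in> V" "z \<in> V" using wz(1) uv by auto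
    have fwz: "f w = f z" if "f \<in> B k" for f using that wz(1) by (auto simp: B_def kuv doubleton_eq_iff)
    have card2: "card (V - {w,y}) = card V - 2" using finV wzV xy wz by (simp add: card_Diff_subset)
    have "card (B k \<inter> B l) \<le> m ^ card (V - {w,y})"
    proof (rule restrict_bound[where V = V and L = "\<lambda>_. {0..<m}"])
      show "finite (V - {w,y})" using finV by simp
      show "V - {w,y} \<subseteq> V" by auto
      show "\<forall>a\<in>V - {w,y}. card {0..<m} = m" by auto
      show "\<forall>a\<in>V - {w,y}. finite {0..<m::nat}" by auto
      show "B k \<inter> B l \<subseteq> PiE V (\<lambda>_. {0..<m})" by (auto simp: B_def F_def)
      show "inj_on (\<lambda>f. restrict f (V - {w,y})) (B k \<inter> B l)"
      proof (rule inj_onI)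
        fix f g assume f: "f \<in> B k \<inter> B l" and g: "g \<in> B k \<inter> B l" and eq: "restrict f (V - {w,y}) = restrict g (V - {w,y})"
        have agree: "\<And>t. t \<in> V - {w,y} \<Longrightarrow> f t = g t" using eq by (metis restrict_apply')
        have fF: "f \<in> F" and gF: "g \<in> F" using f g by (auto simp: B_def)
        have "f x = g x" using agree xy wz by auto
        moreover have "f x = f y" "g x = g y" using f g by (auto simp: B_def lxy)
        ultimately have ay: "f y = g y" by simp
        have az: "f z = g z" using agree ay wzV wz by (cases "z = y") auto
        have "f w = f z" "g w = g z" using fwz f g by auto
        then have aw: "f w = g w" using az by simp
        show "f = g"
          by (rule PiE_ext[of f V "\<lambda>_. {0..<m}" g]) (use fF gF agree ay aw in \<open>auto simp: F_def\<close>)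
      qed
    qed
    then show ?thesis using card2 by simp
  qed
  let ?e = "real (card E')"
  let ?M1 = "real m ^ (card V - 1)"
  let ?M2 = "real m ^ (card V - 2)"
  have s1: "(\<Sum>k\<in>E'. real (card (B k))) \<ge> ?e * ?M1"
  proof -
    have "(\<Sum>k\<in>E'. ?M1) \<le> (\<Sum>k\<in>E'. real (card (B k)))"
      by (rule sum_mono) (use cB in \<open>simp add: of_nat_le_iff[symmetric]\<close>)
    then show ?thesis by simp
  qed
  have s2: "(\<Sum>k\<in>E'. \<Sum>l\<in>E'-{k}. real (card (B k \<inter> B l))) \<le> ?e * (?e * ?M2)"
  proof -
    have "(\<Sum>k\<in>E'. \<Sum>l\<in>E'-{k}. real (card (B k \<inter> B l))) \<le> (\<Sum>k\<in>E'. ?e * ?M2)"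
    proof (rule sum_mono)
      fix k assume k: "k \<in> E'"
      have "(\<Sum>l\<in>E'-{k}. real (card (B k \<inter> B l))) \<le> real (card (E' - {k})) * ?M2"
      proof (rule sum_bounded_above)
        fix l assume "l \<in> E' - {k}"
        then have "card (B k \<inter> B l) \<le> m ^ (card V - 2)" using cBB k by blast
        then show "real (card (B k \<inter> B l)) \<le> ?M2" by (metis of_nat_le_iff of_nat_power)
      qed
      also have "\<dots> \<le> ?e * ?M2"
        by (rule mult_right_mono) (use finE card_Diff1_le[of E' k] in auto)
      finally show "(\<Sum>l\<in>E'-{k}. real (card (B k \<inter> B l))) \<le> ?e * ?M2" .
    qed
    then show ?thesis by simp
  qed
  have bon: "real (card (\<Union>k\<in>E'. B k)) \<ge> ?e * ?M1 - ?e * (?e * ?M2)"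
    using bonf[OF finE finB] s1 s2 by linarith
  have US: "(\<Union>k\<in>E'. B k) \<subseteq> F" by (auto simp: B_def)
  have "card (F - (\<Union>k\<in>E'. B k)) = card F - card (\<Union>k\<in>E'. B k)"
    by (rule card_Diff_subset[OF finite_subset[OF US finF] US])
  moreover have "card (\<Union>k\<in>E'. B k) \<le> card F" by (rule card_mono[OF finF US])
  ultimately have "real (chrom_poly V E m) = real (card F) - real (card (\<Union>k\<in>E'. B k))"
    unfolding chrom_poly_def chr by simp
  then show ?thesis using bon cardF unfolding E'_def[symmetric] by (simp add: power2_eq_square)
qed



lemma triv_cover:
  fixes V :: "'a set" and E
  assumes G: "simple_graph V E"
  shows "is_m_fold_cover V E m (\<lambda>u. {u} \<times> {0..<m}) (V \<times> {0..<m})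
           {((u,i),(v,j)). u \<in> V \<and> v \<in> V \<and> i < m \<and> j < m \<and> ((u = v \<and> i \<noteq> j) \<or> ((u,v) \<in> E \<and> i = j))}"
    (is "is_m_fold_cover V E m ?L ?VH ?EH")
proof -
  have finV: "finite V" and EV: "E \<subseteq> V \<times> V" and symE: "sym E" and irrE: "irrefl E"
    using G by (auto simp: simple_graph_def)
  have sg: "simple_graph ?VH ?EH"
    unfolding simple_graph_def
  proof (intro conjI)
    show "finite ?VH" using finV by simp
    show "?EH \<subseteq> ?VH \<times> ?VH" by auto
    show "sym ?EH" using symE unfolding sym_def by auto
    show "irrefl ?EH" using irrE unfolding irrefl_def by auto
  qed
  have c3: "\<forall>u\<in>V. \<forall>v\<in>V. edges_between ?EH (?L u) (?L v) \<noteq> {} \<longrightarrow> u = v \<or> (u,v) \<in> E"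
    by (auto simp: edges_between_def)
  have c4: "\<forall>(u,v)\<in>E. \<forall>(x1,y1)\<in>edges_between ?EH (?L u) (?L v). \<forall>(x2,y2)\<in>edges_between ?EH (?L u) (?L v).
         (x1 = x2 \<longleftrightarrow> y1 = y2)"
    using irrE by (auto simp: edges_between_def irrefl_def)
  show ?thesis
    unfolding is_m_fold_cover_def is_cover_def
    using sg c3 c4 by auto
qed

lemma triv_count:
  fixes V :: "'a set" and E
  assumes G: "simple_graph V E"
  shows "P_DP_cover V (V \<times> {0..<m})
           {((u,i),(v,j)). u \<in> V \<and> v \<in> V \<and> i < m \<and> j < m \<and> ((u = v \<and> i \<noteq> j) \<or> ((u,v) \<in> E \<and> i = j))}
         \<le> chrom_poly V E m"
    (is "P_DP_cover V ?VH ?EH \<le> _")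
proof -
  have finV: "finite V" using G by (auto simp: simple_graph_def)
  define Col where "Col = {f. f \<in> V \<rightarrow>\<^sub>E {0..<m} \<and> (\<forall>(u,v)\<in>E. f u \<noteq> f v)}"
  define S where "S = {I. I \<subseteq> ?VH \<and> (\<forall>x\<in>I. \<forall>y\<in>I. (x,y) \<notin> ?EH) \<and> card I = card V}"
  have finCol: "finite Col"
    by (rule finite_subset[of _ "V \<rightarrow>\<^sub>E {0..<m}"]) (use finV in \<open>auto simp: Col_def intro: finite_PiE\<close>)
  have sub: "S \<subseteq> (\<lambda>c. (\<lambda>u. (u, c u)) ` V) ` Col"
  proof
    fix I assume "I \<in> S"
    then have IV: "I \<subseteq> ?VH" and ind: "\<forall>x\<in>I. \<forall>y\<in>I. (x,y) \<notin> ?EH" and cI: "card I = card V"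
      by (auto simp: S_def)
    have uniq: "i = j" if "(u,i) \<in> I" "(u,j) \<in> I" for u i j
    proof (rule ccontr)
      assume "i \<noteq> j"
      moreover have "u \<in> V" "i < m" "j < m" using that IV by auto
      ultimately have mem: "((u,i),(u,j)) \<in> ?EH" by simp
      show False by (rule notE[OF bspec[OF bspec[OF ind that(1)] that(2)] mem])
    qed
    have finI: "finite I" using IV finV by (auto intro: finite_subset)
    have injf: "inj_on fst I"
    proof (rule inj_onI)
      fix x y assume "x \<in> I" "y \<in> I" "fst x = fst y"
      then show "x = y" using uniq by (metis prod.collapse)
    qed
    have fV: "fst ` I \<subseteq> V" using IV by auto
    have "card (fst ` I) = card V" using card_image[OF injf] cI by simp
    then have fIV: "fst ` I = V" using card_subset_eq[OF finV fV] by simp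
    define c where "c = restrict (\<lambda>u. THE i. (u,i) \<in> I) V"
    have inI: "(u, c u) \<in> I" if u: "u \<in> V" for u
    proof -
      obtain i where i: "(u,i) \<in> I" using u fIV by force
      have "(THE i. (u,i) \<in> I) = i" using i uniq by blast
      then show ?thesis using i u by (simp add: c_def)
    qed
    have Ieq: "I = (\<lambda>u. (u, c u)) ` V"
    proof (intro equalityI subsetI)
      fix x assume x: "x \<in> I"
      obtain u i where xu: "x = (u,i)" by fastforce
      have u: "u \<in> V" using x xu IV by auto
      have "i = c u" using uniq[OF x[unfolded xu] inI[OF u]] .
      then show "x \<in> (\<lambda>u. (u, c u)) ` V" using xu u by auto
    next
      fix x assume "x \<in> (\<lambda>u. (u, c u)) ` V"
      then show "x \<in> I" using inI by auto
    qed
    have cm: "c u < m" if "u \<in> V" for u using inI[OF that] IV by auto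
    have "c \<in> V \<rightarrow>\<^sub>E {0..<m}" using cm by (auto simp: c_def)
    moreover have "\<forall>(u,v)\<in>E. c u \<noteq> c v"
    proof (clarify)
      fix u v assume uv: "(u,v) \<in> E" and eq: "c u = c v"
      have "u \<in> V" "v \<in> V" using uv G by (auto simp: simple_graph_def)
      then have mem: "((u, c u), (v, c v)) \<in> ?EH" using uv eq cm by simp
      have i1: "(u, c u) \<in> I" and i2: "(v, c v) \<in> I" using inI \<open>u \<in> V\<close> \<open>v \<in> V\<close> by auto
      show False by (rule notE[OF bspec[OF bspec[OF ind i1] i2] mem])
    qed
    ultimately have "c \<in> Col" by (simp add: Col_def)
    then show "I \<in> (\<lambda>c. (\<lambda>u. (u, c u)) ` V) ` Col" using Ieq by blast
  qed
  have "card S \<le> card ((\<lambda>c. (\<lambda>u. (u, c u)) ` V) ` Col)"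
    by (rule card_mono[OF finite_imageI[OF finCol] sub])
  also have "\<dots> \<le> card Col" by (rule card_image_le[OF finCol])
  finally show ?thesis by (simp add: Col_def S_def chrom_poly_def P_DP_cover_def)
qed

theorem mainTheorem3:
  fixes V :: "'a set" and E :: "('a \<times> 'a) set"
  assumes "simple_graph V E"
  shows "(\<lambda>m::nat. real (chrom_poly V E m) - real (P_DP V E m))
           \<in> O(\<lambda>m. real m powr (real (card V) - 2))"
proof -
  have G: "simple_graph V E" by fact
  have finV: "finite V" and EV: "E \<subseteq> V \<times> V" and irrE: "irrefl E"
    using G by (auto simp: simple_graph_def)
  obtain h :: "'a \<Rightarrow> nat" and N where "h ` V = {i. i < N}" "inj_on h V"
    using finite_imp_inj_to_nat_seg[OF finV] by blast
  then have h: "inj_on h V" by simp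
  define e where "e = card {(u,v)\<in>E. h u < h v}"
  define n where "n = card V"
  have bound: "0 \<le> real (chrom_poly V E m) - real (P_DP V E m) \<and>
               real (chrom_poly V E m) - real (P_DP V E m) \<le> real e ^ 2 * real m ^ (n - 2)" for m
  proof -
    define S where "S = {P_DP_cover V VH EH | (L :: 'a \<Rightarrow> ('a \<times> nat) set) VH EH.
                       is_m_fold_cover V E m L VH EH}"
    have PD: "P_DP V E m = Inf S" by (simp add: P_DP_def S_def)
    have trivS: "P_DP_cover V (V \<times> {0..<m})
           {((u,i),(v,j)). u \<in> V \<and> v \<in> V \<and> i < m \<and> j < m \<and> ((u = v \<and> i \<noteq> j) \<or> ((u,v) \<in> E \<and> i = j))} \<in> S"
      unfolding S_def using triv_cover[OF G, of m] by blast
    then have ne: "S \<noteq> {}" by auto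
    have le1: "Inf S \<le> P_DP_cover V (V \<times> {0..<m})
           {((u,i),(v,j)). u \<in> V \<and> v \<in> V \<and> i < m \<and> j < m \<and> ((u = v \<and> i \<noteq> j) \<or> ((u,v) \<in> E \<and> i = j))}"
      by (rule cInf_lower[OF trivS]) simp
    have "P_DP V E m \<le> chrom_poly V E m" using le1 triv_count[OF G, of m] PD by simp
    moreover have "Inf S \<in> S" by (rule Inf_nat_def1[OF ne])
    then obtain L :: "'a \<Rightarrow> ('a \<times> nat) set" and VH EH where
      C: "is_m_fold_cover V E m L VH EH" and eqI: "Inf S = P_DP_cover V VH EH"
      unfolding S_def by blast
    have lo: "real (m ^ card V) - real e * real m ^ (card V - 1) \<le> real (P_DP V E m)"
      using dp_lower[OF G C h] eqI PD by (simp add: e_def)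
    have up: "real (chrom_poly V E m) \<le> real m ^ card V - real e * real m ^ (card V - 1)
            + real e ^ 2 * real m ^ (card V - 2)"
      using chrom_upper[OF G h, of m] by (simp add: e_def)
    ultimately show ?thesis using lo up by (simp add: n_def)
  qed
  have e0: "n < 2 \<Longrightarrow> e = 0"
  proof -
    assume n2: "n < 2"
    have "{(u,v)\<in>E. h u < h v} = {}"
    proof (rule ccontr)
      assume "{(u,v)\<in>E. h u < h v} \<noteq> {}"
      then obtain u v where "(u,v) \<in> E" by auto
      then have "u \<in> V" "v \<in> V" "u \<noteq> v" using EV irrE by (auto simp: irrefl_def)
      then have "card {u,v} \<le> card V" using finV by (intro card_mono) auto
      then show False using \<open>u \<noteq> v\<close> n2 by (simp add: n_def)
    qed
    then show "e = 0" unfolding e_def by (metis card.empty)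
  qed
  show ?thesis
  proof (rule bigoI[where c = "real e ^ 2"])
    show "eventually (\<lambda>m. norm (real (chrom_poly V E m) - real (P_DP V E m))
            \<le> real e ^ 2 * norm (real m powr (real (card V) - 2))) at_top"
      using eventually_ge_at_top[of "1::nat"]
    proof eventually_elim
      case (elim m)
      have b: "0 \<le> real (chrom_poly V E m) - real (P_DP V E m)"
          "real (chrom_poly V E m) - real (P_DP V E m) \<le> real e ^ 2 * real m ^ (n - 2)"
        using bound[of m] by auto
      have b0: "norm (real (chrom_poly V E m) - real (P_DP V E m)) = real (chrom_poly V E m) - real (P_DP V E m)"
        using b(1) by simp
      show ?case
      proof (cases "n < 2")
        case True
        then have "e = 0" by (rule e0)
        then show ?thesis using b b0 by simp
      next
        case False
        have "real m powr (real (card V) - 2) = real m powr (real (n-2))"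
          using False by (simp add: n_def of_nat_diff)
        also have "\<dots> = real m ^ (n-2)" using elim by (simp add: powr_realpow)
        finally have "norm (real m powr (real (card V) - 2)) = real m ^ (n - 2)" by simp
        then show ?thesis using b b0 by simp
      qed
    qed
  qed
qed

end
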